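(* Let $F$ be a unitary $N=(2,2)$ full vertex operator superalgebra, let $p,q\in\mathbb R$, $a,b\in\mathbb R_{\ge0}$, and let $v\in F^{(p,q)}_{a+p/2,\,b+q/2}$ be nonzero. Then $$\frac{1}{a+1}\Big(2a+\frac c3\big((a+2)^2-\tfrac14\big)\Big)\ge p,\qquad \frac{1}{b+1}\Big(2b+\frac{\bar c}3\big((b+2)^2-\tfrac14\big)\Big)\ge q.$$ In particular, for any $a,b\in\mathbb R_{\ge0}$, $\sum_{p,q\in\mathbb R}\dim F^{(p,q)}_{a+p/2,\,b+q/2}<\infty$.
   Context: A unitary $N=(2,2)$ full VOA is a full vertex operator superalgebra $F=\bigoplus_{(h,\bar h)\in\mathbb R^2}F_{h,\bar h}$ (Moriwaki's axioms: real-analytic locality/associativity of $Y(a,\underline z)=\sum_{r,s}a(r,s)z^{-r-1}\bar z^{-s-1}$, vacuum $\mathbf 1$, $F_{0,0}=\mathbb C\mathbf 1$, $F_{h,\bar h}=0$ unless $h-\bar h\in\frac12\mathbb Z$, $\sum_{h+\bar h<K}\dim F_{h,\bar h}<\infty$ for all $K$, bounded below bigrading, conformal vectors $\omega\in F_{2,0},\bar\omega\in F_{0,2}$ giving commuting Virasoro actions $L(n),\bar L(n)$ of central charges $c,\bar c>0$ with $L(0),\bar L(0)$ the bigrading) with holomorphic $\tau^\pm\in F_{3/2,0}$, $J\in F_{1,0}$ and antiholomorphic $\bar\tau^\pm\in F_{0,3/2}$, $\bar J\in F_{0,1}$ whose modes $G^\pm_r,J_n$ ($Y(\tau^\pm,\underline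 z)=\sum_{r\in\frac12+\mathbb Z}G^\pm_rz^{-r-3/2}$, $Y(J,\underline z)=\sum J_nz^{-n-1}$) and $\bar G^\pm_r,\bar J_n$ satisfy two supercommuting copies of the $N=2$ Neveu–Schwarz relations ($[J_m,J_n]=\frac c3m\delta_{m+n,0}$, $[J_m,G^\pm_r]=\pm G^\pm_{m+r}$, $[L_m,G^\pm_r]=(\frac m2-r)G^\pm_{m+r}$, $[L_m,J_n]=-nJ_{m+n}$, $[G^\pm_r,G^\pm_s]_+=0$, $[G^+_r,G^-_s]_+=L_{r+s}+\frac12(r-s)J_{r+s}+\frac c6(r^2-\frac14)\delta_{r+s,0}$; barred with $\bar c$), $J_0,\bar J_0$ semisimple with real eigenvalues, $J_0-\bar J_0$ integral with $\exp(\pi i(J_0-\bar J_0))$ the parity operator; plus an invariant symmetric bilinear form ($(\mathbf 1,\mathbf 1)=1$, $(u,Y(a,\underline z)v)=(Y(e^{L(1)z+\bar L(1)\bar z}(-1)^{(L(0)-\bar L(0))+2(L(0)-\bar L(0))^2}z^{-2L(0)}\bar z^{-2\bar L(0)}a,\underline z^{-1})u,v)$) and an anti-linear involutive automorphism $\phi$ with $\phi(J)=-J,\phi(\tau^\pm)=\tau^\mp,\phi(\bar J)=-\bar J,\phi(\bar\tau^\pm)=-\bar\tau^\mp$ and $(\phi(\cdot),\cdot)$ positive definite. $F^{(p,q)}_{h,\bar h}=\{v\in F_{h,\bar h}:J_0v=pv,\bar J_0v=qv\}$. *)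

theory Defs
  imports "HOL-Analysis.Analysis"
begin

text \<open>
  The underlying space is the
  whole type 'v, a complex vector space with scalar multiplication sc.
  The vertex operator is given by its modes: Y a r s b = a(r,s) b, i.e.
  Y(a,z)b = sum over r,s of a(r,s) b z^(-r-1) zbar^(-s-1) with real exponents.
\<close>

record 'v n22_data =
  sc    :: "complex \<Rightarrow> 'v \<Rightarrow> 'v"
  Y     :: "'v \<Rightarrow> real \<Rightarrow> real \<Rightarrow> 'v \<Rightarrow> 'v"
  vac   :: 'v
  om    :: 'v
  omb   :: 'v
  taup  :: 'v
  taum  :: 'v
  jj    :: 'v
  taubp :: 'v
  taubm :: 'v
  jjb   :: 'v
  cc    :: real
  ccb   :: real
  form  :: "'v \<Rightarrow> 'v \<Rightarrow> complex"
  phi   :: "'v \<Rightarrow> 'v"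

definition Lm :: "('v, 'z) n22_data_scheme \<Rightarrow> int \<Rightarrow> 'v \<Rightarrow> 'v" where
  "Lm F n = Y F (om F) (real_of_int n + 1) (-1)"
definition Lbm :: "('v, 'z) n22_data_scheme \<Rightarrow> int \<Rightarrow> 'v \<Rightarrow> 'v" where
  "Lbm F n = Y F (omb F) (-1) (real_of_int n + 1)"
definition Jm :: "('v, 'z) n22_data_scheme \<Rightarrow> int \<Rightarrow> 'v \<Rightarrow> 'v" where
  "Jm F n = Y F (jj F) (real_of_int n) (-1)"
definition Jbm :: "('v, 'z) n22_data_scheme \<Rightarrow> int \<Rightarrow> 'v \<Rightarrow> 'v" where
  "Jbm F n = Y F (jjb F) (-1) (real_of_int n)"
text \<open>G^{+-}_r for r in 1/2 + Z; Y(tau,z) = sum G_r z^(-r-3/2), so G_r = tau(r+1/2,-1).\<close>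
definition Gp :: "('v, 'z) n22_data_scheme \<Rightarrow> real \<Rightarrow> 'v \<Rightarrow> 'v" where
  "Gp F r = Y F (taup F) (r + 1/2) (-1)"
definition Gm :: "('v, 'z) n22_data_scheme \<Rightarrow> real \<Rightarrow> 'v \<Rightarrow> 'v" where
  "Gm F r = Y F (taum F) (r + 1/2) (-1)"
definition Gbp :: "('v, 'z) n22_data_scheme \<Rightarrow> real \<Rightarrow> 'v \<Rightarrow> 'v" where
  "Gbp F r = Y F (taubp F) (-1) (r + 1/2)"
definition Gbm :: "('v, 'z) n22_data_scheme \<Rightarrow> real \<Rightarrow> 'v \<Rightarrow> 'v" where
  "Gbm F r = Y F (taubm F) (-1) (r + 1/2)"

definition hi :: "int \<Rightarrow> real" where "hi k = real_of_int k + 1/2"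

definition Fhom :: "('v::ab_group_add, 'z) n22_data_scheme \<Rightarrow> real \<Rightarrow> real \<Rightarrow> 'v set" where
  "Fhom F h hb = {v. Lm F 0 v = sc F (complex_of_real h) v \<and> Lbm F 0 v = sc F (complex_of_real hb) v}"

definition Fchg :: "('v::ab_group_add, 'z) n22_data_scheme \<Rightarrow> real \<Rightarrow> real \<Rightarrow> real \<Rightarrow> real \<Rightarrow> 'v set" where
  "Fchg F p q h hb = {v \<in> Fhom F h hb. Jm F 0 v = sc F (complex_of_real p) v
                                      \<and> Jbm F 0 v = sc F (complex_of_real q) v}"

definition fin_dim :: "(complex \<Rightarrow> 'v::ab_group_add \<Rightarrow> 'v) \<Rightarrow> 'v set \<Rightarrow> bool" where
  "fin_dim s S \<longleftrightarrow> (\<exists>B. finite B \<and> S \<subseteq> module.span s B)"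

definition commute_ops :: "('v \<Rightarrow> 'v) \<Rightarrow> ('v \<Rightarrow> 'v) \<Rightarrow> bool" where
  "commute_ops f g \<longleftrightarrow> (\<forall>x. f (g x) = g (f x))"
definition anticommute_ops :: "('v::ab_group_add \<Rightarrow> 'v) \<Rightarrow> ('v \<Rightarrow> 'v) \<Rightarrow> bool" where
  "anticommute_ops f g \<longleftrightarrow> (\<forall>x. f (g x) + g (f x) = 0)"

definition full_vosa_axioms :: "('v::ab_group_add, 'z) n22_data_scheme \<Rightarrow> bool" where
  "full_vosa_axioms F \<longleftrightarrow>
     vector_space (sc F)
   \<and> (\<forall>a r s. Vector_Spaces.linear (sc F) (sc F) (Y F a r s))
   \<and> (\<forall>b r s. Vector_Spaces.linear (sc F) (sc F) (\<lambda>a. Y F a r s b))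
   \<and> UNIV = module.span (sc F) (\<Union>h hb. Fhom F h hb)
   \<and> vac F \<noteq> 0
   \<and> Fhom F 0 0 = module.span (sc F) {vac F}
   \<and> (\<forall>h hb. Fhom F h hb \<noteq> {0} \<longrightarrow> 2 * (h - hb) \<in> \<int>)
   \<and> (\<forall>K. finite {(h, hb). h + hb < K \<and> Fhom F h hb \<noteq> {0}})
   \<and> (\<forall>h hb. fin_dim (sc F) (Fhom F h hb))
   \<and> (\<exists>m. \<forall>h hb. Fhom F h hb \<noteq> {0} \<longrightarrow> m \<le> h \<and> m \<le> hb)
   \<and> (\<forall>r s b. Y F (vac F) r s b = (if r = -1 \<and> s = -1 then b else 0))
   \<and> (\<forall>a. Y F a (-1) (-1) (vac F) = a)
   \<and> (\<forall>a r s. \<not> (r \<in> \<int> \<and> s \<in> \<int> \<and> r \<le> -1 \<and> s \<le> -1) \<longrightarrow> Y F a r s (vac F) = 0)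
   \<and> (\<forall>a b h hb h' hb' r s. a \<in> Fhom F h hb \<longrightarrow> b \<in> Fhom F h' hb' \<longrightarrow>
          Y F a r s b \<in> Fhom F (h + h' - r - 1) (hb + hb' - s - 1))
   \<and> (\<forall>a r s b. Y F (Lm F (-1) a) r s b = sc F (complex_of_real (- r)) (Y F a (r - 1) s b))
   \<and> (\<forall>a r s b. Y F (Lbm F (-1) a) r s b = sc F (complex_of_real (- s)) (Y F a r (s - 1) b))"

definition n22_algebra_axioms :: "('v::ab_group_add, 'z) n22_data_scheme \<Rightarrow> bool" where
  "n22_algebra_axioms F \<longleftrightarrow>
     0 < cc F \<and> 0 < ccb F
   \<and> om F \<in> Fhom F 2 0 \<and> omb F \<in> Fhom F 0 2
   \<and> taup F \<in> Fhom F (3/2) 0 \<and> taum F \<in> Fhom F (3/2) 0 \<and> jj F \<in> Fhom F 1 0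
   \<and> taubp F \<in> Fhom F 0 (3/2) \<and> taubm F \<in> Fhom F 0 (3/2) \<and> jjb F \<in> Fhom F 0 1
   \<and> (\<forall>a \<in> {om F, taup F, taum F, jj F}. \<forall>r s b. s \<noteq> -1 \<longrightarrow> Y F a r s b = 0)
   \<and> (\<forall>a \<in> {omb F, taubp F, taubm F, jjb F}. \<forall>r s b. r \<noteq> -1 \<longrightarrow> Y F a r s b = 0)
   \<comment> \<open>Virasoro relations\<close>
   \<and> (\<forall>m n x. Lm F m (Lm F n x) - Lm F n (Lm F m x)
        = sc F (of_int (m - n)) (Lm F (m + n) x)
          + (if m + n = 0 then sc F (complex_of_real (cc F / 12 * (real_of_int m ^ 3 - real_of_int m))) x else 0))
   \<and> (\<forall>m n x. Lbm F m (Lbm F n x) - Lbm F n (Lbm F m x)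
        = sc F (of_int (m - n)) (Lbm F (m + n) x)
          + (if m + n = 0 then sc F (complex_of_real (ccb F / 12 * (real_of_int m ^ 3 - real_of_int m))) x else 0))
   \<comment> \<open>holomorphic N=2 NS relations\<close>
   \<and> (\<forall>m n x. Jm F m (Jm F n x) - Jm F n (Jm F m x)
        = (if m + n = 0 then sc F (complex_of_real (cc F / 3 * real_of_int m)) x else 0))
   \<and> (\<forall>m k x. Jm F m (Gp F (hi k) x) - Gp F (hi k) (Jm F m x) = Gp F (real_of_int m + hi k) x)
   \<and> (\<forall>m k x. Jm F m (Gm F (hi k) x) - Gm F (hi k) (Jm F m x) = - Gm F (real_of_int m + hi k) x)
   \<and> (\<forall>m k x. Lm F m (Gp F (hi k) x) - Gp F (hi k) (Lm F m x)
        = sc F (complex_of_real (real_of_int m / 2 - hi k)) (Gp F (real_of_int m + hi k) x))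
   \<and> (\<forall>m k x. Lm F m (Gm F (hi k) x) - Gm F (hi k) (Lm F m x)
        = sc F (complex_of_real (real_of_int m / 2 - hi k)) (Gm F (real_of_int m + hi k) x))
   \<and> (\<forall>m n x. Lm F m (Jm F n x) - Jm F n (Lm F m x) = sc F (of_int (- n)) (Jm F (m + n) x))
   \<and> (\<forall>k l x. Gp F (hi k) (Gp F (hi l) x) + Gp F (hi l) (Gp F (hi k) x) = 0)
   \<and> (\<forall>k l x. Gm F (hi k) (Gm F (hi l) x) + Gm F (hi l) (Gm F (hi k) x) = 0)
   \<and> (\<forall>k l x. Gp F (hi k) (Gm F (hi l) x) + Gm F (hi l) (Gp F (hi k) x)
        = Lm F (k + l + 1) x + sc F (complex_of_real ((hi k - hi l) / 2)) (Jm F (k + l + 1) x)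
          + (if k + l + 1 = 0 then sc F (complex_of_real (cc F / 6 * (hi k ^ 2 - 1/4))) x else 0))
   \<comment> \<open>antiholomorphic N=2 NS relations\<close>
   \<and> (\<forall>m n x. Jbm F m (Jbm F n x) - Jbm F n (Jbm F m x)
        = (if m + n = 0 then sc F (complex_of_real (ccb F / 3 * real_of_int m)) x else 0))
   \<and> (\<forall>m k x. Jbm F m (Gbp F (hi k) x) - Gbp F (hi k) (Jbm F m x) = Gbp F (real_of_int m + hi k) x)
   \<and> (\<forall>m k x. Jbm F m (Gbm F (hi k) x) - Gbm F (hi k) (Jbm F m x) = - Gbm F (real_of_int m + hi k) x)
   \<and> (\<forall>m k x. Lbm F m (Gbp F (hi k) x) - Gbp F (hi k) (Lbm F m x)
        = sc F (complex_of_real (real_of_int m / 2 - hi k)) (Gbp F (real_of_int m + hi k) x))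
   \<and> (\<forall>m k x. Lbm F m (Gbm F (hi k) x) - Gbm F (hi k) (Lbm F m x)
        = sc F (complex_of_real (real_of_int m / 2 - hi k)) (Gbm F (real_of_int m + hi k) x))
   \<and> (\<forall>m n x. Lbm F m (Jbm F n x) - Jbm F n (Lbm F m x) = sc F (of_int (- n)) (Jbm F (m + n) x))
   \<and> (\<forall>k l x. Gbp F (hi k) (Gbp F (hi l) x) + Gbp F (hi l) (Gbp F (hi k) x) = 0)
   \<and> (\<forall>k l x. Gbm F (hi k) (Gbm F (hi l) x) + Gbm F (hi l) (Gbm F (hi k) x) = 0)
   \<and> (\<forall>k l x. Gbp F (hi k) (Gbm F (hi l) x) + Gbm F (hi l) (Gbp F (hi k) x)
        = Lbm F (k + l + 1) x + sc F (complex_of_real ((hi k - hi l) / 2)) (Jbm F (k + l + 1) x)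
          + (if k + l + 1 = 0 then sc F (complex_of_real (ccb F / 6 * (hi k ^ 2 - 1/4))) x else 0))
   \<comment> \<open>the two copies supercommute\<close>
   \<and> (\<forall>m n. commute_ops (Lm F m) (Lbm F n) \<and> commute_ops (Lm F m) (Jbm F n)
          \<and> commute_ops (Jm F m) (Lbm F n) \<and> commute_ops (Jm F m) (Jbm F n))
   \<and> (\<forall>m k. commute_ops (Lm F m) (Gbp F (hi k)) \<and> commute_ops (Lm F m) (Gbm F (hi k))
          \<and> commute_ops (Jm F m) (Gbp F (hi k)) \<and> commute_ops (Jm F m) (Gbm F (hi k))
          \<and> commute_ops (Lbm F m) (Gp F (hi k)) \<and> commute_ops (Lbm F m) (Gm F (hi k))
          \<and> commute_ops (Jbm F m) (Gp F (hi k)) \<and> commute_ops (Jbm F m) (Gm F (hi k)))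
   \<and> (\<forall>k l. anticommute_ops (Gp F (hi k)) (Gbp F (hi l)) \<and> anticommute_ops (Gp F (hi k)) (Gbm F (hi l))
          \<and> anticommute_ops (Gm F (hi k)) (Gbp F (hi l)) \<and> anticommute_ops (Gm F (hi k)) (Gbm F (hi l)))
   \<comment> \<open>J_0, Jbar_0 semisimple with real eigenvalues, J_0 - Jbar_0 integral\<close>
   \<and> UNIV = module.span (sc F) (\<Union>p q h hb. Fchg F p q h hb)
   \<and> (\<forall>p q h hb. Fchg F p q h hb \<noteq> {0} \<longrightarrow> p - q \<in> \<int>)"

definition invariant_form_axioms :: "('v::ab_group_add, 'z) n22_data_scheme \<Rightarrow> bool" where
  "invariant_form_axioms F \<longleftrightarrow>
     (\<forall>u v. form F u v = form F v u)
   \<and> (\<forall>c u w v. form F (sc F c u + w) v = c * form F u v + form F w v)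
   \<and> form F (vac F) (vac F) = 1
   \<and> (\<forall>a h hb u v r s N. a \<in> Fhom F h hb \<longrightarrow> (Lm F 1 ^^ N) a = 0 \<longrightarrow> (Lbm F 1 ^^ N) a = 0 \<longrightarrow>
        form F u (Y F a r s v)
        = complex_of_real (cos (pi * ((h - hb) + 2 * (h - hb)^2)))
          * (\<Sum>k<N. \<Sum>l<N. form F (Y F ((Lm F 1 ^^ k) ((Lbm F 1 ^^ l) a))
                                         (2 * h - real k - r - 2) (2 * hb - real l - s - 2) u) v
                            / (fact k * fact l)))"

definition unitary_axioms :: "('v::ab_group_add, 'z) n22_data_scheme \<Rightarrow> bool" where
  "unitary_axioms F \<longleftrightarrow>
     (\<forall>x y. phi F (x + y) = phi F x + phi F y)
   \<and> (\<forall>c x. phi F (sc F c x) = sc F (cnj c) (phi F x))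
   \<and> (\<forall>x. phi F (phi F x) = x)
   \<and> (\<forall>a r s b. phi F (Y F a r s b) = Y F (phi F a) r s (phi F b))
   \<and> phi F (vac F) = vac F \<and> phi F (om F) = om F \<and> phi F (omb F) = omb F
   \<and> phi F (jj F) = - jj F \<and> phi F (taup F) = taum F \<and> phi F (taum F) = taup F
   \<and> phi F (jjb F) = - jjb F \<and> phi F (taubp F) = - taubm F \<and> phi F (taubm F) = - taubp F
   \<and> (\<forall>u. u \<noteq> 0 \<longrightarrow> Im (form F (phi F u) u) = 0 \<and> 0 < Re (form F (phi F u) u))"

definition unitary_N22_full_VOA :: "('v::ab_group_add, 'z) n22_data_scheme \<Rightarrow> bool" where
  "unitary_N22_full_VOA F \<longleftrightarrow>
     full_vosa_axioms F \<and> n22_algebra_axioms F \<and> invariant_form_axioms F \<and> unitary_axioms F"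

end

theory Submission
  imports Defs
begin

lemma F_vs:
  fixes F :: "('v::ab_group_add, 'z) n22_data_scheme"
  assumes "unitary_N22_full_VOA F"
  shows "vector_space (sc F)"
  using assms unfolding unitary_N22_full_VOA_def full_vosa_axioms_def
  apply (elim conjE)
  apply assumption
  done

lemma F_linY:
  fixes F :: "('v::ab_group_add, 'z) n22_data_scheme"
  assumes "unitary_N22_full_VOA F"
  shows "\<forall>a r s. Vector_Spaces.linear (sc F) (sc F) (Y F a r s)"
  using assms unfolding unitary_N22_full_VOA_def full_vosa_axioms_def
  apply (elim conjE)
  apply assumption
  done

lemma F_linA:
  fixes F :: "('v::ab_group_add, 'z) n22_data_scheme"
  assumes "unitary_N22_full_VOA F"
  shows "\<forall>b r s. Vector_Spaces.linear (sc F) (sc F) (\<lambda>a. Y F a r s b)"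
  using assms unfolding unitary_N22_full_VOA_def full_vosa_axioms_def
  apply (elim conjE)
  apply assumption
  done

lemma F_fin:
  fixes F :: "('v::ab_group_add, 'z) n22_data_scheme"
  assumes "unitary_N22_full_VOA F"
  shows "\<forall>K. finite {(h, hb). h + hb < K \<and> Fhom F h hb \<noteq> {0}}"
  using assms unfolding unitary_N22_full_VOA_def full_vosa_axioms_def
  apply (elim conjE)
  apply assumption
  done

lemma F_fd:
  fixes F :: "('v::ab_group_add, 'z) n22_data_scheme"
  assumes "unitary_N22_full_VOA F"
  shows "\<forall>h hb. fin_dim (sc F) (Fhom F h hb)"
  using assms unfolding unitary_N22_full_VOA_def full_vosa_axioms_def
  apply (elim conjE)
  apply assumption
  done

lemma F_vac1:
  fixes F :: "('v::ab_group_add, 'z) n22_data_scheme"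
  assumes "unitary_N22_full_VOA F"
  shows "\<forall>a. Y F a (-1) (-1) (vac F) = a"
  using assms unfolding unitary_N22_full_VOA_def full_vosa_axioms_def
  apply (elim conjE)
  apply assumption
  done

lemma F_vac2:
  fixes F :: "('v::ab_group_add, 'z) n22_data_scheme"
  assumes "unitary_N22_full_VOA F"
  shows "\<forall>a r s. \<not> (r \<in> \<int> \<and> s \<in> \<int> \<and> r \<le> -1 \<and> s \<le> -1) \<longrightarrow> Y F a r s (vac F) = 0"
  using assms unfolding unitary_N22_full_VOA_def full_vosa_axioms_def
  apply (elim conjE)
  apply assumption
  done

lemma N_cc:
  fixes F :: "('v::ab_group_add, 'z) n22_data_scheme"
  assumes "unitary_N22_full_VOA F"
  shows "0 < cc F"
  using assms unfolding unitary_N22_full_VOA_def n22_algebra_axioms_def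
  apply (elim conjE)
  apply assumption
  done

lemma N_ccb:
  fixes F :: "('v::ab_group_add, 'z) n22_data_scheme"
  assumes "unitary_N22_full_VOA F"
  shows "0 < ccb F"
  using assms unfolding unitary_N22_full_VOA_def n22_algebra_axioms_def
  apply (elim conjE)
  apply assumption
  done

lemma N_taup:
  fixes F :: "('v::ab_group_add, 'z) n22_data_scheme"
  assumes "unitary_N22_full_VOA F"
  shows "taup F \<in> Fhom F (3/2) 0"
  using assms unfolding unitary_N22_full_VOA_def n22_algebra_axioms_def
  apply (elim conjE)
  apply assumption
  done

lemma N_taum:
  fixes F :: "('v::ab_group_add, 'z) n22_data_scheme"
  assumes "unitary_N22_full_VOA F"
  shows "taum F \<in> Fhom F (3/2) 0"
  using assms unfolding unitary_N22_full_VOA_def n22_algebra_axioms_def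
  apply (elim conjE)
  apply assumption
  done

lemma N_taubp:
  fixes F :: "('v::ab_group_add, 'z) n22_data_scheme"
  assumes "unitary_N22_full_VOA F"
  shows "taubp F \<in> Fhom F 0 (3/2)"
  using assms unfolding unitary_N22_full_VOA_def n22_algebra_axioms_def
  apply (elim conjE)
  apply assumption
  done

lemma N_taubm:
  fixes F :: "('v::ab_group_add, 'z) n22_data_scheme"
  assumes "unitary_N22_full_VOA F"
  shows "taubm F \<in> Fhom F 0 (3/2)"
  using assms unfolding unitary_N22_full_VOA_def n22_algebra_axioms_def
  apply (elim conjE)
  apply assumption
  done

lemma N_LGp:
  fixes F :: "('v::ab_group_add, 'z) n22_data_scheme"
  assumes "unitary_N22_full_VOA F"
  shows "\<forall>m k x. Lm F m (Gp F (hi k) x) - Gp F (hi k) (Lm F m x)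
        = sc F (complex_of_real (real_of_int m / 2 - hi k)) (Gp F (real_of_int m + hi k) x)"
  using assms unfolding unitary_N22_full_VOA_def n22_algebra_axioms_def
  apply (elim conjE)
  apply assumption
  done

lemma N_LGm:
  fixes F :: "('v::ab_group_add, 'z) n22_data_scheme"
  assumes "unitary_N22_full_VOA F"
  shows "\<forall>m k x. Lm F m (Gm F (hi k) x) - Gm F (hi k) (Lm F m x)
        = sc F (complex_of_real (real_of_int m / 2 - hi k)) (Gm F (real_of_int m + hi k) x)"
  using assms unfolding unitary_N22_full_VOA_def n22_algebra_axioms_def
  apply (elim conjE)
  apply assumption
  done

lemma N_GpGm:
  fixes F :: "('v::ab_group_add, 'z) n22_data_scheme"
  assumes "unitary_N22_full_VOA F"
  shows "\<forall>k l x. Gp F (hi k) (Gm F (hi l) x) + Gm F (hi l) (Gp F (hi k) x)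
        = Lm F (k + l + 1) x + sc F (complex_of_real ((hi k - hi l) / 2)) (Jm F (k + l + 1) x)
          + (if k + l + 1 = 0 then sc F (complex_of_real (cc F / 6 * (hi k ^ 2 - 1/4))) x else 0)"
  using assms unfolding unitary_N22_full_VOA_def n22_algebra_axioms_def
  apply (elim conjE)
  apply assumption
  done

lemma N_LbGbp:
  fixes F :: "('v::ab_group_add, 'z) n22_data_scheme"
  assumes "unitary_N22_full_VOA F"
  shows "\<forall>m k x. Lbm F m (Gbp F (hi k) x) - Gbp F (hi k) (Lbm F m x)
        = sc F (complex_of_real (real_of_int m / 2 - hi k)) (Gbp F (real_of_int m + hi k) x)"
  using assms unfolding unitary_N22_full_VOA_def n22_algebra_axioms_def
  apply (elim conjE)
  apply assumption
  done

lemma N_LbGbm: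
  fixes F :: "('v::ab_group_add, 'z) n22_data_scheme"
  assumes "unitary_N22_full_VOA F"
  shows "\<forall>m k x. Lbm F m (Gbm F (hi k) x) - Gbm F (hi k) (Lbm F m x)
        = sc F (complex_of_real (real_of_int m / 2 - hi k)) (Gbm F (real_of_int m + hi k) x)"
  using assms unfolding unitary_N22_full_VOA_def n22_algebra_axioms_def
  apply (elim conjE)
  apply assumption
  done

lemma N_GbpGbm:
  fixes F :: "('v::ab_group_add, 'z) n22_data_scheme"
  assumes "unitary_N22_full_VOA F"
  shows "\<forall>k l x. Gbp F (hi k) (Gbm F (hi l) x) + Gbm F (hi l) (Gbp F (hi k) x)
        = Lbm F (k + l + 1) x + sc F (complex_of_real ((hi k - hi l) / 2)) (Jbm F (k + l + 1) x)
          + (if k + l + 1 = 0 then sc F (complex_of_real (ccb F / 6 * (hi k ^ 2 - 1/4))) x else 0)"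
  using assms unfolding unitary_N22_full_VOA_def n22_algebra_axioms_def
  apply (elim conjE)
  apply assumption
  done

lemma N_comm:
  fixes F :: "('v::ab_group_add, 'z) n22_data_scheme"
  assumes "unitary_N22_full_VOA F"
  shows "\<forall>m k. commute_ops (Lm F m) (Gbp F (hi k)) \<and> commute_ops (Lm F m) (Gbm F (hi k))
          \<and> commute_ops (Jm F m) (Gbp F (hi k)) \<and> commute_ops (Jm F m) (Gbm F (hi k))
          \<and> commute_ops (Lbm F m) (Gp F (hi k)) \<and> commute_ops (Lbm F m) (Gm F (hi k))
          \<and> commute_ops (Jbm F m) (Gp F (hi k)) \<and> commute_ops (Jbm F m) (Gm F (hi k))"
  using assms unfolding unitary_N22_full_VOA_def n22_algebra_axioms_def
  apply (elim conjE)
  apply assumption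
  done

lemma I_sym:
  fixes F :: "('v::ab_group_add, 'z) n22_data_scheme"
  assumes "unitary_N22_full_VOA F"
  shows "\<forall>u v. form F u v = form F v u"
  using assms unfolding unitary_N22_full_VOA_def invariant_form_axioms_def
  apply (elim conjE)
  apply assumption
  done

lemma I_lin:
  fixes F :: "('v::ab_group_add, 'z) n22_data_scheme"
  assumes "unitary_N22_full_VOA F"
  shows "\<forall>c u w v. form F (sc F c u + w) v = c * form F u v + form F w v"
  using assms unfolding unitary_N22_full_VOA_def invariant_form_axioms_def
  apply (elim conjE)
  apply assumption
  done

lemma I_inv:
  fixes F :: "('v::ab_group_add, 'z) n22_data_scheme"
  assumes "unitary_N22_full_VOA F"
  shows "\<forall>a h hb u v r s N. a \<in> Fhom F h hb \<longrightarrow> (Lm F 1 ^^ N) a = 0 \<longrightarrow> (Lbm F 1 ^^ N) a = 0 \<longrightarrow>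
        form F u (Y F a r s v)
        = complex_of_real (cos (pi * ((h - hb) + 2 * (h - hb)^2)))
          * (\<Sum>k<N. \<Sum>l<N. form F (Y F ((Lm F 1 ^^ k) ((Lbm F 1 ^^ l) a))
                                         (2 * h - real k - r - 2) (2 * hb - real l - s - 2) u) v
                            / (fact k * fact l))"
  using assms unfolding unitary_N22_full_VOA_def invariant_form_axioms_def
  apply (elim conjE)
  apply assumption
  done

lemma U_add:
  fixes F :: "('v::ab_group_add, 'z) n22_data_scheme"
  assumes "unitary_N22_full_VOA F"
  shows "\<forall>x y. phi F (x + y) = phi F x + phi F y"
  using assms unfolding unitary_N22_full_VOA_def unitary_axioms_def
  apply (elim conjE)
  apply assumption
  done

lemma U_Y:
  fixes F :: "('v::ab_group_add, 'z) n22_data_scheme"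
  assumes "unitary_N22_full_VOA F"
  shows "\<forall>a r s b. phi F (Y F a r s b) = Y F (phi F a) r s (phi F b)"
  using assms unfolding unitary_N22_full_VOA_def unitary_axioms_def
  apply (elim conjE)
  apply assumption
  done

lemma U_taup:
  fixes F :: "('v::ab_group_add, 'z) n22_data_scheme"
  assumes "unitary_N22_full_VOA F"
  shows "phi F (taup F) = taum F"
  using assms unfolding unitary_N22_full_VOA_def unitary_axioms_def
  apply (elim conjE)
  apply assumption
  done

lemma U_taum:
  fixes F :: "('v::ab_group_add, 'z) n22_data_scheme"
  assumes "unitary_N22_full_VOA F"
  shows "phi F (taum F) = taup F"
  using assms unfolding unitary_N22_full_VOA_def unitary_axioms_def
  apply (elim conjE)
  apply assumption
  done

lemma U_taubp:
  fixes F :: "('v::ab_group_add, 'z) n22_data_scheme"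
  assumes "unitary_N22_full_VOA F"
  shows "phi F (taubp F) = - taubm F"
  using assms unfolding unitary_N22_full_VOA_def unitary_axioms_def
  apply (elim conjE)
  apply assumption
  done

lemma U_taubm:
  fixes F :: "('v::ab_group_add, 'z) n22_data_scheme"
  assumes "unitary_N22_full_VOA F"
  shows "phi F (taubm F) = - taubp F"
  using assms unfolding unitary_N22_full_VOA_def unitary_axioms_def
  apply (elim conjE)
  apply assumption
  done

lemma U_pos:
  fixes F :: "('v::ab_group_add, 'z) n22_data_scheme"
  assumes "unitary_N22_full_VOA F"
  shows "\<forall>u. u \<noteq> 0 \<longrightarrow> Im (form F (phi F u) u) = 0 \<and> 0 < Re (form F (phi F u) u)"
  using assms unfolding unitary_N22_full_VOA_def unitary_axioms_def
  apply (elim conjE)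
  apply assumption
  done
lemma M_mod:
  fixes F :: "('v::ab_group_add, 'z) n22_data_scheme"
  assumes "unitary_N22_full_VOA F" shows "module (sc F)"
  using F_vs[OF assms] module_iff_vector_space by blast

lemma Y_add:
  fixes F :: "('v::ab_group_add, 'z) n22_data_scheme"
  assumes "unitary_N22_full_VOA F" shows "Y F a r s (x + y) = Y F a r s x + Y F a r s y"
  using F_linY[OF assms, THEN spec[of _ a], THEN spec[of _ r], THEN spec[of _ s]] unfolding Vector_Spaces.linear_iff by blast

lemma Y_zero:
  fixes F :: "('v::ab_group_add, 'z) n22_data_scheme"
  assumes "unitary_N22_full_VOA F" shows "Y F a r s 0 = 0"
  using Y_add[OF assms, of a r s 0 0] by simp

lemma Y_negA:
  fixes F :: "('v::ab_group_add, 'z) n22_data_scheme"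
  assumes A: "unitary_N22_full_VOA F" shows "Y F (- a) r s b = - Y F a r s b"
proof -
  have ad: "\<And>x y. Y F (x + y) r s b = Y F x r s b + Y F y r s b"
    using F_linA[OF A, THEN spec[of _ b], THEN spec[of _ r], THEN spec[of _ s]] unfolding Vector_Spaces.linear_iff by blast
  have "Y F 0 r s b = 0" using ad[of 0 0] by simp
  moreover have "Y F (a + - a) r s b = Y F a r s b + Y F (- a) r s b" by (rule ad)
  ultimately show ?thesis by (simp add: eq_neg_iff_add_eq_0 add.commute)
qed

lemma phi_zero:
  fixes F :: "('v::ab_group_add, 'z) n22_data_scheme"
  assumes A: "unitary_N22_full_VOA F" shows "phi F 0 = 0"
  using U_add[OF A] by (metis add_cancel_right_right add_0)

lemma form_zero:
  fixes F :: "('v::ab_group_add, 'z) n22_data_scheme"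
  assumes A: "unitary_N22_full_VOA F" shows "form F 0 v = 0"
proof -
  interpret M: module "sc F" by (rule M_mod[OF A])
  have "form F (sc F 1 0 + 0) v = 1 * form F 0 v + form F 0 v" using I_lin[OF A] by blast
  then show ?thesis by simp
qed

lemma form_add:
  fixes F :: "('v::ab_group_add, 'z) n22_data_scheme"
  assumes A: "unitary_N22_full_VOA F" shows "form F (x + y) v = form F x v + form F y v"
proof -
  interpret M: module "sc F" by (rule M_mod[OF A])
  have "form F (sc F 1 x + y) v = 1 * form F x v + form F y v" using I_lin[OF A] by blast
  then show ?thesis by simp
qed

lemma form_scale:
  fixes F :: "('v::ab_group_add, 'z) n22_data_scheme"
  assumes A: "unitary_N22_full_VOA F" shows "form F (sc F c x) v = c * form F x v"
proof -
  have "form F (sc F c x + 0) v = c * form F x v + form F 0 v" using I_lin[OF A] by blast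
  then show ?thesis by (simp add: form_zero[OF A])
qed

lemma form_neg:
  fixes F :: "('v::ab_group_add, 'z) n22_data_scheme"
  assumes A: "unitary_N22_full_VOA F" shows "form F (- x) v = - form F x v"
  using form_add[OF A, of x "- x" v] form_zero[OF A, of v] by (simp add: eq_neg_iff_add_eq_0 add.commute)

lemma form_add_r:
  fixes F :: "('v::ab_group_add, 'z) n22_data_scheme"
  assumes A: "unitary_N22_full_VOA F" shows "form F v (x + y) = form F v x + form F v y"
  using form_add[OF A] I_sym[OF A] by metis

lemma form_scale_r:
  fixes F :: "('v::ab_group_add, 'z) n22_data_scheme"
  assumes A: "unitary_N22_full_VOA F" shows "form F v (sc F c x) = c * form F v x"
  using form_scale[OF A] I_sym[OF A] by metis

lemma hi_neg: "hi (- j - 1) = - hi j"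
  unfolding hi_def by simp

lemma Gm_vac:
  fixes F :: "('v::ab_group_add, 'z) n22_data_scheme"
  assumes A: "unitary_N22_full_VOA F"
  shows "Gm F (hi (-2)) (vac F) = taum F" "Gm F (1 + hi (-2)) (vac F) = 0"
    "Gp F (hi (-2)) (vac F) = taup F" "Gp F (1 + hi (-2)) (vac F) = 0"
    "Gbm F (hi (-2)) (vac F) = taubm F" "Gbm F (1 + hi (-2)) (vac F) = 0"
    "Gbp F (hi (-2)) (vac F) = taubp F" "Gbp F (1 + hi (-2)) (vac F) = 0"
    "Lm F 1 (vac F) = 0" "Lbm F 1 (vac F) = 0"
  using F_vac1[OF A] F_vac2[OF A]
  by (simp_all add: Gm_def Gp_def Gbm_def Gbp_def Lm_def Lbm_def hi_def)

lemma tau_qp: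
  fixes F :: "('v::ab_group_add, 'z) n22_data_scheme"
  assumes A: "unitary_N22_full_VOA F"
  shows "Lm F 1 (taum F) = 0" "Lbm F 1 (taum F) = 0"
    "Lm F 1 (taup F) = 0" "Lbm F 1 (taup F) = 0"
    "Lm F 1 (taubm F) = 0" "Lbm F 1 (taubm F) = 0"
    "Lm F 1 (taubp F) = 0" "Lbm F 1 (taubp F) = 0"
proof -
  interpret M: module "sc F" by (rule M_mod[OF A])
  note V = Gm_vac[OF A]
  note Z = Y_zero[OF A]
  have c: "commute_ops (Lm F 1) (Gbp F (hi (-2))) \<and> commute_ops (Lm F 1) (Gbm F (hi (-2)))
      \<and> commute_ops (Lbm F 1) (Gp F (hi (-2))) \<and> commute_ops (Lbm F 1) (Gm F (hi (-2)))"
    using N_comm[OF A] by blast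
  have "Lm F 1 (Gm F (hi (-2)) (vac F)) - Gm F (hi (-2)) (Lm F 1 (vac F))
        = sc F (complex_of_real (real_of_int 1 / 2 - hi (-2))) (Gm F (real_of_int 1 + hi (-2)) (vac F))"
    using N_LGm[OF A] by blast
  then show "Lm F 1 (taum F) = 0" using V by (simp add: Gm_def Z)
  have "Lm F 1 (Gp F (hi (-2)) (vac F)) - Gp F (hi (-2)) (Lm F 1 (vac F))
        = sc F (complex_of_real (real_of_int 1 / 2 - hi (-2))) (Gp F (real_of_int 1 + hi (-2)) (vac F))"
    using N_LGp[OF A] by blast
  then show "Lm F 1 (taup F) = 0" using V by (simp add: Gp_def Z)
  have "Lbm F 1 (Gbm F (hi (-2)) (vac F)) - Gbm F (hi (-2)) (Lbm F 1 (vac F))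
        = sc F (complex_of_real (real_of_int 1 / 2 - hi (-2))) (Gbm F (real_of_int 1 + hi (-2)) (vac F))"
    using N_LbGbm[OF A] by blast
  then show "Lbm F 1 (taubm F) = 0" using V by (simp add: Gbm_def Z)
  have "Lbm F 1 (Gbp F (hi (-2)) (vac F)) - Gbp F (hi (-2)) (Lbm F 1 (vac F))
        = sc F (complex_of_real (real_of_int 1 / 2 - hi (-2))) (Gbp F (real_of_int 1 + hi (-2)) (vac F))"
    using N_LbGbp[OF A] by blast
  then show "Lbm F 1 (taubp F) = 0" using V by (simp add: Gbp_def Z)
  show "Lbm F 1 (taum F) = 0" using c V unfolding commute_ops_def by (metis Gm_def Z)
  show "Lbm F 1 (taup F) = 0" using c V unfolding commute_ops_def by (metis Gp_def Z)
  show "Lm F 1 (taubm F) = 0" using c V unfolding commute_ops_def by (metis Gbm_def Z)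
  show "Lm F 1 (taubp F) = 0" using c V unfolding commute_ops_def by (metis Gbp_def Z)
qed
lemma cos6: "cos (pi * ((3/2 - 0) + 2 * (3/2 - 0)^2)) = 1"
proof -
  have "(3/2 - 0) + 2 * (3/2 - 0)^2 = (6::real)" by (simp add: power2_eq_square)
  then show ?thesis by simp
qed

lemma cos3: "cos (pi * ((0 - 3/2) + 2 * (0 - 3/2)^2)) = -1"
proof -
  have "(0 - 3/2) + 2 * (0 - 3/2)^2 = (3::real)" by (simp add: power2_eq_square)
  then show ?thesis by simp
qed

lemma adj_m:
  fixes F :: "('v::ab_group_add, 'z) n22_data_scheme"
  assumes A: "unitary_N22_full_VOA F"
  shows "form F u (Gm F R v) = form F (Gm F (- R) u) v"
proof -
  have "form F u (Y F (taum F) (R + 1/2) (-1) v)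
        = complex_of_real (cos (pi * ((3/2 - 0) + 2 * (3/2 - 0)^2)))
          * (\<Sum>k<1. \<Sum>l<1. form F (Y F ((Lm F 1 ^^ k) ((Lbm F 1 ^^ l) (taum F)))
                                         (2 * (3/2) - real k - (R + 1/2) - 2) (2 * 0 - real l - (-1) - 2) u) v
                            / (fact k * fact l))"
    using I_inv[OF A, rule_format, OF N_taum[OF A], where u=u and v=v and r="R + 1/2" and s="-1" and N=1] tau_qp[OF A] by simp
  also have "\<dots> = form F (Y F (taum F) (- R + 1/2) (-1) u) v"
    unfolding cos6 by (simp add: algebra_simps)
  finally show ?thesis by (simp add: Gm_def)
qed

lemma adj_p:
  fixes F :: "('v::ab_group_add, 'z) n22_data_scheme"
  assumes A: "unitary_N22_full_VOA F"
  shows "form F u (Gp F R v) = form F (Gp F (- R) u) v"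
proof -
  have "form F u (Y F (taup F) (R + 1/2) (-1) v)
        = complex_of_real (cos (pi * ((3/2 - 0) + 2 * (3/2 - 0)^2)))
          * (\<Sum>k<1. \<Sum>l<1. form F (Y F ((Lm F 1 ^^ k) ((Lbm F 1 ^^ l) (taup F)))
                                         (2 * (3/2) - real k - (R + 1/2) - 2) (2 * 0 - real l - (-1) - 2) u) v
                            / (fact k * fact l))"
    using I_inv[OF A, rule_format, OF N_taup[OF A], where u=u and v=v and r="R + 1/2" and s="-1" and N=1] tau_qp[OF A] by simp
  also have "\<dots> = form F (Y F (taup F) (- R + 1/2) (-1) u) v"
    unfolding cos6 by (simp add: algebra_simps)
  finally show ?thesis by (simp add: Gp_def)
qed

lemma adj_bm:
  fixes F :: "('v::ab_group_add, 'z) n22_data_scheme"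
  assumes A: "unitary_N22_full_VOA F"
  shows "form F u (Gbm F R v) = - form F (Gbm F (- R) u) v"
proof -
  have "form F u (Y F (taubm F) (-1) (R + 1/2) v)
        = complex_of_real (cos (pi * ((0 - 3/2) + 2 * (0 - 3/2)^2)))
          * (\<Sum>k<1. \<Sum>l<1. form F (Y F ((Lm F 1 ^^ k) ((Lbm F 1 ^^ l) (taubm F)))
                                         (2 * 0 - real k - (-1) - 2) (2 * (3/2) - real l - (R + 1/2) - 2) u) v
                            / (fact k * fact l))"
    using I_inv[OF A, rule_format, OF N_taubm[OF A], where u=u and v=v and s="R + 1/2" and r="-1" and N=1] tau_qp[OF A] by simp
  also have "\<dots> = - form F (Y F (taubm F) (-1) (- R + 1/2) u) v"
    unfolding cos3 by (simp add: algebra_simps)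
  finally show ?thesis by (simp add: Gbm_def)
qed

lemma adj_bp:
  fixes F :: "('v::ab_group_add, 'z) n22_data_scheme"
  assumes A: "unitary_N22_full_VOA F"
  shows "form F u (Gbp F R v) = - form F (Gbp F (- R) u) v"
proof -
  have "form F u (Y F (taubp F) (-1) (R + 1/2) v)
        = complex_of_real (cos (pi * ((0 - 3/2) + 2 * (0 - 3/2)^2)))
          * (\<Sum>k<1. \<Sum>l<1. form F (Y F ((Lm F 1 ^^ k) ((Lbm F 1 ^^ l) (taubp F)))
                                         (2 * 0 - real k - (-1) - 2) (2 * (3/2) - real l - (R + 1/2) - 2) u) v
                            / (fact k * fact l))"
    using I_inv[OF A, rule_format, OF N_taubp[OF A], where u=u and v=v and s="R + 1/2" and r="-1" and N=1] tau_qp[OF A] by simp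
  also have "\<dots> = - form F (Y F (taubp F) (-1) (- R + 1/2) u) v"
    unfolding cos3 by (simp add: algebra_simps)
  finally show ?thesis by (simp add: Gbp_def)
qed

lemma pos_form:
  fixes F :: "('v::ab_group_add, 'z) n22_data_scheme"
  assumes A: "unitary_N22_full_VOA F"
  shows "0 \<le> Re (form F (phi F u) u)"
proof (cases "u = 0")
  case True then show ?thesis by (simp add: phi_zero[OF A] form_zero[OF A])
next
  case False then show ?thesis using U_pos[OF A] by (simp add: less_imp_le)
qed

lemma holo_bound:
  fixes F :: "('v::ab_group_add, 'z) n22_data_scheme"
  assumes A: "unitary_N22_full_VOA F" and v: "v \<in> Fchg F p q h hb" and nz: "v \<noteq> 0"
  shows "0 \<le> h - hi j * p + cc F / 6 * (hi j ^ 2 - 1/4)"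
proof -
  interpret M: module "sc F" by (rule M_mod[OF A])
  define r where "r = hi j"
  define lam where "lam = h - r * p + cc F / 6 * (r ^ 2 - 1/4)"
  have L0: "Lm F 0 v = sc F (complex_of_real h) v" and J0: "Jm F 0 v = sc F (complex_of_real p) v"
    using v unfolding Fchg_def Fhom_def by auto
  have rel: "Gp F (hi (-j-1)) (Gm F (hi j) v) + Gm F (hi j) (Gp F (hi (-j-1)) v)
        = Lm F ((-j-1) + j + 1) v + sc F (complex_of_real ((hi (-j-1) - hi j) / 2)) (Jm F ((-j-1) + j + 1) v)
          + (if (-j-1) + j + 1 = 0 then sc F (complex_of_real (cc F / 6 * (hi (-j-1) ^ 2 - 1/4))) v else 0)"
    using N_GpGm[OF A] by blast
  have rhs: "Lm F 0 v + sc F (complex_of_real (- r)) (Jm F 0 v)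
          + sc F (complex_of_real (cc F / 6 * (r ^ 2 - 1/4))) v = sc F (complex_of_real lam) v"
    proof -
      have e: "complex_of_real h + complex_of_real (- r) * complex_of_real p
          + complex_of_real (cc F / 6 * (r ^ 2 - 1/4)) = complex_of_real lam"
        unfolding lam_def by simp
      show ?thesis unfolding L0 J0 M.scale_scale M.scale_left_distrib[symmetric] e ..
    qed
  define U where "U = Gm F r v"
  define W where "W = Gp F (- r) v"
  have rel2: "Gp F (- r) U + Gm F r W = sc F (complex_of_real lam) v"
    using rel rhs unfolding U_def W_def r_def hi_neg by simp
  have phU: "phi F U = Gp F r (phi F v)"
    unfolding U_def Gm_def Gp_def using U_Y[OF A] U_taum[OF A] by simp
  have phW: "phi F W = Gm F (- r) (phi F v)"
    unfolding W_def Gm_def Gp_def using U_Y[OF A] U_taup[OF A] by simp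
  have "form F (phi F v) (Gp F (- r) U + Gm F r W) = form F (phi F U) U + form F (phi F W) W"
    unfolding form_add_r[OF A] adj_p[OF A, of _ "- r"] adj_m[OF A, of _ r] phU phW by simp
  moreover have "form F (phi F v) (sc F (complex_of_real lam) v) = complex_of_real lam * form F (phi F v) v"
    by (rule form_scale_r[OF A])
  ultimately have eq: "complex_of_real lam * form F (phi F v) v = form F (phi F U) U + form F (phi F W) W"
    using rel2 by simp
  have "Re (complex_of_real lam * form F (phi F v) v) = lam * Re (form F (phi F v) v)" by simp
  then have "lam * Re (form F (phi F v) v) \<ge> 0"
    using eq pos_form[OF A, of U] pos_form[OF A, of W] by simp
  moreover have "Re (form F (phi F v) v) > 0" using U_pos[OF A] nz by blast
  ultimately have "lam \<ge> 0" by (simp add: zero_le_mult_iff)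
  then show ?thesis unfolding lam_def r_def .
qed

lemma antiholo_bound:
  fixes F :: "('v::ab_group_add, 'z) n22_data_scheme"
  assumes A: "unitary_N22_full_VOA F" and v: "v \<in> Fchg F p q h hb" and nz: "v \<noteq> 0"
  shows "0 \<le> hb - hi j * q + ccb F / 6 * (hi j ^ 2 - 1/4)"
proof -
  interpret M: module "sc F" by (rule M_mod[OF A])
  define r where "r = hi j"
  define lam where "lam = hb - r * q + ccb F / 6 * (r ^ 2 - 1/4)"
  have L0: "Lbm F 0 v = sc F (complex_of_real hb) v" and J0: "Jbm F 0 v = sc F (complex_of_real q) v"
    using v unfolding Fchg_def Fhom_def by auto
  have rel: "Gbp F (hi (-j-1)) (Gbm F (hi j) v) + Gbm F (hi j) (Gbp F (hi (-j-1)) v)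
        = Lbm F ((-j-1) + j + 1) v + sc F (complex_of_real ((hi (-j-1) - hi j) / 2)) (Jbm F ((-j-1) + j + 1) v)
          + (if (-j-1) + j + 1 = 0 then sc F (complex_of_real (ccb F / 6 * (hi (-j-1) ^ 2 - 1/4))) v else 0)"
    using N_GbpGbm[OF A] by blast
  have rhs: "Lbm F 0 v + sc F (complex_of_real (- r)) (Jbm F 0 v)
          + sc F (complex_of_real (ccb F / 6 * (r ^ 2 - 1/4))) v = sc F (complex_of_real lam) v"
    proof -
      have e: "complex_of_real hb + complex_of_real (- r) * complex_of_real q
          + complex_of_real (ccb F / 6 * (r ^ 2 - 1/4)) = complex_of_real lam"
        unfolding lam_def by simp
      show ?thesis unfolding L0 J0 M.scale_scale M.scale_left_distrib[symmetric] e ..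
    qed
  define U where "U = Gbm F r v"
  define W where "W = Gbp F (- r) v"
  have rel2: "Gbp F (- r) U + Gbm F r W = sc F (complex_of_real lam) v"
    using rel rhs unfolding U_def W_def r_def hi_neg by simp
  have phU: "phi F U = - Gbp F r (phi F v)"
    unfolding U_def Gbm_def Gbp_def using U_Y[OF A] U_taubm[OF A] Y_negA[OF A] by simp
  have phW: "phi F W = - Gbm F (- r) (phi F v)"
    unfolding W_def Gbm_def Gbp_def using U_Y[OF A] U_taubp[OF A] Y_negA[OF A] by simp
  have "form F (phi F v) (Gbp F (- r) U + Gbm F r W) = form F (phi F U) U + form F (phi F W) W"
    unfolding form_add_r[OF A] adj_bp[OF A, of _ "- r"] adj_bm[OF A, of _ r] phU phW form_neg[OF A] by simp
  moreover have "form F (phi F v) (sc F (complex_of_real lam) v) = complex_of_real lam * form F (phi F v) v"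
    by (rule form_scale_r[OF A])
  ultimately have eq: "complex_of_real lam * form F (phi F v) v = form F (phi F U) U + form F (phi F W) W"
    using rel2 by simp
  have "Re (complex_of_real lam * form F (phi F v) v) = lam * Re (form F (phi F v) v)" by simp
  then have "lam * Re (form F (phi F v) v) \<ge> 0"
    using eq pos_form[OF A, of U] pos_form[OF A, of W] by simp
  moreover have "Re (form F (phi F v) v) > 0" using U_pos[OF A] nz by blast
  ultimately have "lam \<ge> 0" by (simp add: zero_le_mult_iff)
  then show ?thesis unfolding lam_def r_def .
qed

lemma arith_bound:
  fixes a p c :: real
  assumes a: "0 \<le> a" and c: "0 < c"
    and H: "\<And>j::int. 0 \<le> a + p / 2 - hi j * p + c / 6 * (hi j ^ 2 - 1/4)"
  shows "(2 * a + c / 3 * ((a + 2)^2 - 1/4)) / (a + 1) \<ge> p"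
proof -
  define x where "x = real_of_int (ceiling a)"
  have x1: "a \<le> x" and x2: "x < a + 1" unfolding x_def by linarith+
  define r where "r = x + 3/2"
  have hr: "hi (ceiling a + 1) = r" unfolding hi_def r_def x_def by simp
  have H1: "0 \<le> a + p / 2 - r * p + c / 6 * (r ^ 2 - 1/4)" using H[of "ceiling a + 1"] hr by simp
  have pos: "0 \<le> 2 * a + c / 3 * ((a + 2)^2 - 1/4)"
  proof -
    have "(a + 2)^2 \<ge> 4" using a by (simp add: power2_eq_square algebra_simps)
    then show ?thesis using a c by (simp add: add_nonneg_nonneg)
  qed
  have main: "p * (a + 1) \<le> 2 * a + c / 3 * ((a + 2)^2 - 1/4)"
  proof (cases "p \<le> 0")
    case True
    then have "p * (a + 1) \<le> 0" using a by (simp add: mult_nonpos_nonneg)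
    then show ?thesis using pos by linarith
  next
    case False
    have s1: "p * (x + 1) \<le> a + c / 6 * (r ^ 2 - 1/4)"
      using H1 unfolding r_def by (simp add: algebra_simps)
    have s2: "p * (a + 1) \<le> p * (x + 1)" using False x1 by (simp add: mult_left_mono)
    have "r ^ 2 \<le> (a + 5/2) ^ 2" using x2 x1 a unfolding r_def by (intro power_mono) auto
    then have s3: "c / 6 * (r ^ 2 - 1/4) \<le> c / 6 * ((a + 5/2) ^ 2 - 1/4)"
      using c by (intro mult_left_mono) auto
    have "0 \<le> c * (a^2 + 3 * a + 3/2)" using a c by (intro mult_nonneg_nonneg) auto
    then have s4: "c / 6 * ((a + 5/2) ^ 2 - 1/4) \<le> a + c / 3 * ((a + 2)^2 - 1/4)"
      using a by (simp add: power2_eq_square algebra_simps)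
    show ?thesis using s1 s2 s3 s4 a by linarith
  qed
  show ?thesis using main a by (simp add: pos_le_divide_eq)
qed

lemma zero_in_Fchg:
  fixes F :: "('v::ab_group_add, 'z) n22_data_scheme"
  assumes A: "unitary_N22_full_VOA F"
  shows "0 \<in> Fchg F p q h hb"
proof -
  interpret M: module "sc F" by (rule M_mod[OF A])
  show ?thesis unfolding Fchg_def Fhom_def Lm_def Lbm_def Jm_def Jbm_def
    by (simp add: Y_zero[OF A])
qed

theorem lemma3p30:
  fixes F :: "('v::ab_group_add, 'z) n22_data_scheme"
  assumes "unitary_N22_full_VOA F"
  shows "(\<forall>p q a b v. 0 \<le> a \<longrightarrow> 0 \<le> b \<longrightarrow> v \<in> Fchg F p q (a + p / 2) (b + q / 2) \<longrightarrow> v \<noteq> 0 \<longrightarrow>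
            (2 * a + cc F / 3 * ((a + 2)^2 - 1/4)) / (a + 1) \<ge> p
          \<and> (2 * b + ccb F / 3 * ((b + 2)^2 - 1/4)) / (b + 1) \<ge> q)
       \<and> (\<forall>a b. 0 \<le> a \<longrightarrow> 0 \<le> b \<longrightarrow>
            finite {(p, q). Fchg F p q (a + p / 2) (b + q / 2) \<noteq> {0}}
          \<and> (\<forall>p q. fin_dim (sc F) (Fchg F p q (a + p / 2) (b + q / 2))))"
proof -
  note A = assms
  have P1: "(2 * a + cc F / 3 * ((a + 2)^2 - 1/4)) / (a + 1) \<ge> p
          \<and> (2 * b + ccb F / 3 * ((b + 2)^2 - 1/4)) / (b + 1) \<ge> q"
    if a: "0 \<le> a" and b: "0 \<le> b" and v: "v \<in> Fchg F p q (a + p / 2) (b + q / 2)" and nz: "v \<noteq> 0"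
    for p q a b v
  proof
    show "(2 * a + cc F / 3 * ((a + 2)^2 - 1/4)) / (a + 1) \<ge> p"
      by (rule arith_bound[OF a N_cc[OF A]]) (rule holo_bound[OF A v nz])
    show "(2 * b + ccb F / 3 * ((b + 2)^2 - 1/4)) / (b + 1) \<ge> q"
      by (rule arith_bound[OF b N_ccb[OF A]]) (rule antiholo_bound[OF A v nz])
  qed
  have P2: "finite {(p, q). Fchg F p q (a + p / 2) (b + q / 2) \<noteq> {0}}"
    if a: "0 \<le> a" and b: "0 \<le> b" for a b
  proof -
    define P where "P = (2 * a + cc F / 3 * ((a + 2)^2 - 1/4)) / (a + 1)"
    define Q where "Q = (2 * b + ccb F / 3 * ((b + 2)^2 - 1/4)) / (b + 1)"
    define K where "K = a + b + P / 2 + Q / 2 + 1"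
    define T where "T = {(h, hb). h + hb < K \<and> Fhom F h hb \<noteq> {0}}"
    have fT: "finite T" unfolding T_def by (rule F_fin[OF A, THEN spec[of _ K]])
    have "{(p, q). Fchg F p q (a + p / 2) (b + q / 2) \<noteq> {0}} \<subseteq> (\<lambda>(h, hb). (2 * (h - a), 2 * (hb - b))) ` T"
    proof
      fix z assume z: "z \<in> {(p, q). Fchg F p q (a + p / 2) (b + q / 2) \<noteq> {0}}"
      obtain p q where zpq: "z = (p, q)" by (cases z)
      have ne: "Fchg F p q (a + p / 2) (b + q / 2) \<noteq> {0}" using z zpq by simp
      obtain v where v: "v \<in> Fchg F p q (a + p / 2) (b + q / 2)" and nz: "v \<noteq> 0"
        using ne zero_in_Fchg[OF A, of p q "a + p / 2" "b + q / 2"] by blast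
      have "p \<le> P" "q \<le> Q" using P1[OF a b v nz] unfolding P_def Q_def by auto
      moreover have "Fhom F (a + p / 2) (b + q / 2) \<noteq> {0}"
        using v nz unfolding Fchg_def by blast
      moreover have "a + p / 2 + (b + q / 2) < K" using \<open>p \<le> P\<close> \<open>q \<le> Q\<close> unfolding K_def by linarith
      ultimately have "(a + p / 2, b + q / 2) \<in> T" unfolding T_def by simp
      moreover have "z = (\<lambda>(h, hb). (2 * (h - a), 2 * (hb - b))) (a + p / 2, b + q / 2)"
        using zpq by simp
      ultimately show "z \<in> (\<lambda>(h, hb). (2 * (h - a), 2 * (hb - b))) ` T" by blast
    qed
    then show ?thesis using fT finite_subset by blast
  qed
  have P3: "fin_dim (sc F) (Fchg F p q h hb)" for p q h hb
  proof -
    obtain B where "finite B" "Fhom F h hb \<subseteq> module.span (sc F) B"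
      using F_fd[OF A] unfolding fin_dim_def by blast
    moreover have "Fchg F p q h hb \<subseteq> Fhom F h hb" unfolding Fchg_def by blast
    ultimately show ?thesis unfolding fin_dim_def by blast
  qed
  show ?thesis
  proof (intro conjI allI impI)
    fix p q a b v
    assume "0 \<le> a" "0 \<le> b" "v \<in> Fchg F p q (a + p / 2) (b + q / 2)" "v \<noteq> 0"
    then show "(2 * a + cc F / 3 * ((a + 2)^2 - 1/4)) / (a + 1) \<ge> p"
      "(2 * b + ccb F / 3 * ((b + 2)^2 - 1/4)) / (b + 1) \<ge> q" using P1 by blast+
  next
    fix a b :: real assume "0 \<le> a" "0 \<le> b"
    then show "finite {(p, q). Fchg F p q (a + p / 2) (b + q / 2) \<noteq> {0}}" by (rule P2)
  next
    fix a b p q :: real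
    show "fin_dim (sc F) (Fchg F p q (a + p / 2) (b + q / 2))" by (rule P3)
  qed
qed
end
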